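(* Let $\mathcal X,\mathcal U$ be finite nonempty sets, $f:\mathcal X\times\mathcal U\to\mathcal X$ and $\ell,g:\mathcal X\to\mathbb R$. Let $V_{\mathrm A}^*(x)=\max_{\pi\in\Pi}\min_{\tau\in\mathbb N}g(\xi_x^\pi(\tau))$, $\tilde\ell(x)=\min\{\ell(x),V_{\mathrm A}^*(x)\}$, and $$\tilde v_{\mathrm{RA}}^*(x)=\max_{\mathbf u\in\mathbb U}\max_{\tau\in\mathbb N}\min\Big\{\tilde\ell(\xi_x^{\mathbf u}(\tau)),\min_{\kappa\le\tau}g(\xi_x^{\mathbf u}(\kappa))\Big\}.$$ Then there is a policy $\pi\in\Pi$ such that for all $x\in\mathcal X$, $$\tilde v_{\mathrm{RA}}^*(x)=\max_{\tau\in\mathbb N}\min\Big\{\tilde\ell(\xi_x^\pi(\tau)),\min_{\kappa\le\tau}g(\xi_x^\pi(\kappa))\Big\}.$$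
   Context: $\mathbb N=\{0,1,\dots\}$; $\Pi$ is the set of maps $\mathcal X\to\mathcal U$; $\mathbb U$ is the set of sequences $\mathbb N\to\mathcal U$. For $\pi\in\Pi$: $\xi_x^\pi(0)=x$, $\xi_x^\pi(t+1)=f(\xi_x^\pi(t),\pi(\xi_x^\pi(t)))$. For $\mathbf u\in\mathbb U$: $\xi_x^{\mathbf u}(0)=x$, $\xi_x^{\mathbf u}(t+1)=f(\xi_x^{\mathbf u}(t),\mathbf u(t))$. *)

theory Defs
  imports Complex_Main
begin

text \<open>Finite nonempty state space 'x and input space 'u are modelled by types of
class finite (types are always nonempty). Policies are maps 'x => 'u,
input sequences are maps nat => 'u.\<close>

primrec traj_pol :: "('x \<Rightarrow> 'u \<Rightarrow> 'x) \<Rightarrow> ('x \<Rightarrow> 'u) \<Rightarrow> 'x \<Rightarrow> nat \<Rightarrow> 'x" where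
  "traj_pol f \<pi> x 0 = x"
| "traj_pol f \<pi> x (Suc t) = f (traj_pol f \<pi> x t) (\<pi> (traj_pol f \<pi> x t))"

primrec traj_seq :: "('x \<Rightarrow> 'u \<Rightarrow> 'x) \<Rightarrow> (nat \<Rightarrow> 'u) \<Rightarrow> 'x \<Rightarrow> nat \<Rightarrow> 'x" where
  "traj_seq f u x 0 = x"
| "traj_seq f u x (Suc t) = f (traj_seq f u x t) (u t)"

definition VA :: "('x::finite \<Rightarrow> 'u::finite \<Rightarrow> 'x) \<Rightarrow> ('x \<Rightarrow> real) \<Rightarrow> 'x \<Rightarrow> real" where
  "VA f g x = Max ((\<lambda>\<pi>. Min (range (\<lambda>\<tau>. g (traj_pol f \<pi> x \<tau>)))) ` UNIV)"

definition ltil :: "('x::finite \<Rightarrow> 'u::finite \<Rightarrow> 'x) \<Rightarrow> ('x \<Rightarrow> real) \<Rightarrow> ('x \<Rightarrow> real) \<Rightarrow> 'x \<Rightarrow> real" where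
  "ltil f l g x = min (l x) (VA f g x)"

definition RA_payoff :: "('x \<Rightarrow> real) \<Rightarrow> ('x \<Rightarrow> real) \<Rightarrow> (nat \<Rightarrow> 'x) \<Rightarrow> real" where
  "RA_payoff lt g \<xi> = Max (range (\<lambda>\<tau>. min (lt (\<xi> \<tau>)) (Min ((\<lambda>\<kappa>. g (\<xi> \<kappa>)) ` {..\<tau>}))))"

definition vRA :: "('x::finite \<Rightarrow> 'u::finite \<Rightarrow> 'x) \<Rightarrow> ('x \<Rightarrow> real) \<Rightarrow> ('x \<Rightarrow> real) \<Rightarrow> 'x \<Rightarrow> real" where
  "vRA f l g x = Max ((\<lambda>u. RA_payoff (ltil f l g) g (traj_seq f u x)) ` UNIV)"

end

theory Submission
  imports Defs
begin

definition pay :: "('x \<Rightarrow> real) \<Rightarrow> ('x \<Rightarrow> real) \<Rightarrow> (nat \<Rightarrow> 'x) \<Rightarrow> nat \<Rightarrow> real" where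
  "pay h g \<xi> \<tau> = min (h (\<xi> \<tau>)) (Min ((\<lambda>\<kappa>. g (\<xi> \<kappa>)) ` {..\<tau>}))"

lemma RA_pay: "RA_payoff h g \<xi> = Max (range (pay h g \<xi>))"
  unfolding RA_payoff_def pay_def by simp

lemma pay_in: "pay h g \<xi> \<tau> \<in> range h \<union> range g"
proof -
  have "Min ((\<lambda>\<kappa>. g (\<xi> \<kappa>)) ` {..\<tau>}) \<in> (\<lambda>\<kappa>. g (\<xi> \<kappa>)) ` {..\<tau>}"
    by (rule Min_in) auto
  then have "Min ((\<lambda>\<kappa>. g (\<xi> \<kappa>)) ` {..\<tau>}) \<in> range g" by blast
  then show ?thesis unfolding pay_def by (auto simp: min_def)
qed

lemma fin_pay: "finite (range (pay h g (\<xi> :: nat \<Rightarrow> 'x::finite)))"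
proof -
  have "range (pay h g \<xi>) \<subseteq> range h \<union> range g" using pay_in by blast
  then show ?thesis by (rule finite_subset) auto
qed

lemma RA_ge: "pay h g (\<xi> :: nat \<Rightarrow> 'x::finite) \<tau> \<le> RA_payoff h g \<xi>"
  unfolding RA_pay by (rule Max_ge[OF fin_pay]) auto

lemma RA_ex: "\<exists>\<tau>. RA_payoff h g (\<xi> :: nat \<Rightarrow> 'x::finite) = pay h g \<xi> \<tau>"
proof -
  have "Max (range (pay h g \<xi>)) \<in> range (pay h g \<xi>)"
    by (rule Max_in[OF fin_pay]) auto
  then show ?thesis unfolding RA_pay by auto
qed

lemma RA_in: "RA_payoff h g (\<xi> :: nat \<Rightarrow> 'x::finite) \<in> range h \<union> range g"
  using RA_ex[of h g \<xi>] pay_in by metis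

definition Vs :: "('x::finite \<Rightarrow> 'u::finite \<Rightarrow> 'x) \<Rightarrow> ('x \<Rightarrow> real) \<Rightarrow> ('x \<Rightarrow> real) \<Rightarrow> 'x \<Rightarrow> real" where
  "Vs f h g x = Max ((\<lambda>u. RA_payoff h g (traj_seq f u x)) ` UNIV)"

lemma fin_V: "finite ((\<lambda>u. RA_payoff h g (traj_seq f u (x::'x::finite))) ` UNIV)"
proof -
  have "(\<lambda>u. RA_payoff h g (traj_seq f u x)) ` UNIV \<subseteq> range h \<union> range g" using RA_in by blast
  then show ?thesis by (rule finite_subset) auto
qed

lemma V_ge: "RA_payoff h g (traj_seq f u x) \<le> Vs f h g x"
  unfolding Vs_def by (rule Max_ge[OF fin_V]) auto

lemma V_ex: "\<exists>u \<tau>. Vs f h g x = pay h g (traj_seq f u x) \<tau>"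
proof -
  have "Vs f h g x \<in> (\<lambda>u. RA_payoff h g (traj_seq f u x)) ` UNIV"
    unfolding Vs_def by (rule Max_in[OF fin_V]) auto
  then show ?thesis using RA_ex by fastforce
qed

lemma seq_shift: "traj_seq f u x (Suc t) = traj_seq f (\<lambda>t. u (Suc t)) (f x (u 0)) t"
  by (induction t) auto

lemma pol_shift: "traj_pol f \<pi> x (Suc t) = traj_pol f \<pi> (f x (\<pi> x)) t"
  by (induction t) auto

lemma pol_seq: "traj_pol f \<pi> x = traj_seq f (\<lambda>t. \<pi> (traj_pol f \<pi> x t)) x"
proof
  fix t show "traj_pol f \<pi> x t = traj_seq f (\<lambda>t. \<pi> (traj_pol f \<pi> x t)) x t"
    by (induction t) auto
qed

lemma Min_Suc: "Min ((\<lambda>\<kappa>. G \<kappa>) ` {..Suc k}) = min (G 0) (Min ((\<lambda>\<kappa>. G (Suc \<kappa>)) ` {..k}))"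
proof -
  have "{..Suc k} = insert 0 (Suc ` {..k})" by (rule atMost_Suc_eq_insert_0)
  then have "(\<lambda>\<kappa>. G \<kappa>) ` {..Suc k} = insert (G 0) ((\<lambda>\<kappa>. G (Suc \<kappa>)) ` {..k})" by (simp add: image_image)
  then show ?thesis by (simp del: Min_insert) (simp add: Min_insert)
qed

lemma pay_Suc: "pay h g \<xi> (Suc k) = min (g (\<xi> 0)) (pay h g (\<lambda>t. \<xi> (Suc t)) k)"
  unfolding pay_def Min_Suc[of "\<lambda>\<kappa>. g (\<xi> \<kappa>)"] by (simp add: min.assoc min.left_commute)

lemma main:
  fixes f :: "'x::finite \<Rightarrow> 'u::finite \<Rightarrow> 'x" and h g :: "'x \<Rightarrow> real"
  shows "\<exists>\<pi> :: 'x \<Rightarrow> 'u. \<forall>x. Vs f h g x = RA_payoff h g (traj_pol f \<pi> x)"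
proof -
  let ?V = "Vs f h g"
  define d where "d x = (LEAST k. \<exists>u. pay h g (traj_seq f u x) k \<ge> ?V x)" for x
  have dex: "\<exists>u. pay h g (traj_seq f u x) (d x) \<ge> ?V x" for x
  proof -
    obtain u \<tau> where "?V x = pay h g (traj_seq f u x) \<tau>" using V_ex by blast
    then have "\<exists>k u. pay h g (traj_seq f u x) k \<ge> ?V x" by (metis order_refl)
    then show ?thesis unfolding d_def by (rule LeastI_ex)
  qed
  define U where "U x = (SOME u. pay h g (traj_seq f u x) (d x) \<ge> ?V x)" for x
  have U: "pay h g (traj_seq f (U x) x) (d x) \<ge> ?V x" for x
    unfolding U_def using dex by (rule someI_ex)
  define \<pi> where "\<pi> x = U x 0" for x
  define m where "m x = card {z. ?V z > ?V x}" for x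
  have step: "g x \<ge> ?V x \<and> ?V (f x (\<pi> x)) \<ge> ?V x \<and>
      (?V (f x (\<pi> x)) = ?V x \<longrightarrow> d (f x (\<pi> x)) < d x)" if "d x = Suc k" for x k
  proof -
    let ?u = "\<lambda>t. U x (Suc t)"
    let ?y = "f x (\<pi> x)"
    have "pay h g (traj_seq f (U x) x) (Suc k) \<ge> ?V x" using U[of x] that by simp
    then have 1: "min (g x) (pay h g (traj_seq f ?u ?y) k) \<ge> ?V x"
      unfolding pay_Suc seq_shift \<pi>_def by simp
    then have 2: "pay h g (traj_seq f ?u ?y) k \<ge> ?V x" by simp
    have "?V ?y \<ge> ?V x" using 2 RA_ge[of h g "traj_seq f ?u ?y" k] V_ge[of h g f ?u ?y] by linarith
    moreover have "?V ?y = ?V x \<longrightarrow> d ?y < d x"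
    proof
      assume "?V ?y = ?V x"
      then have "d ?y \<le> k" unfolding d_def using 2 by (metis (mono_tags, lifting) Least_le)
      then show "d ?y < d x" using that by simp
    qed
    ultimately show ?thesis using 1 by simp
  qed
  let ?R = "inv_image (less_than <*lex*> less_than) (\<lambda>x. (m x, d x))"
  have wfR: "wf ?R" by auto
  have ge: "?V x \<le> RA_payoff h g (traj_pol f \<pi> x)" for x
  proof (induction x rule: wf_induct[OF wfR])
    case (1 x)
    show ?case
    proof (cases "d x")
      case 0
      have "?V x \<le> pay h g (traj_seq f (U x) x) 0" using U[of x] 0 by simp
      also have "\<dots> = pay h g (traj_pol f \<pi> x) 0" unfolding pay_def by simp
      also have "\<dots> \<le> RA_payoff h g (traj_pol f \<pi> x)" by (rule RA_ge)
      finally show ?thesis .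
    next
      case (Suc k)
      let ?y = "f x (\<pi> x)"
      note st = step[OF Suc]
      have "(?y, x) \<in> ?R"
      proof (cases "?V ?y = ?V x")
        case True
        then show ?thesis using st m_def by simp
      next
        case False
        then have lt: "?V ?y > ?V x" using st by simp
        have "{z. ?V z > ?V ?y} \<subset> {z. ?V z > ?V x}"
          using lt by auto
        then have "m ?y < m x" unfolding m_def by (intro psubset_card_mono) auto
        then show ?thesis by simp
      qed
      then have IH: "?V ?y \<le> RA_payoff h g (traj_pol f \<pi> ?y)" using 1 by blast
      obtain \<tau> where t: "RA_payoff h g (traj_pol f \<pi> ?y) = pay h g (traj_pol f \<pi> ?y) \<tau>"
        using RA_ex by blast
      have "?V x \<le> min (g x) (pay h g (traj_pol f \<pi> ?y) \<tau>)"
        using st IH t by simp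
      also have "\<dots> = pay h g (traj_pol f \<pi> x) (Suc \<tau>)"
        unfolding pay_Suc pol_shift by simp
      also have "\<dots> \<le> RA_payoff h g (traj_pol f \<pi> x)" by (rule RA_ge)
      finally show ?thesis .
    qed
  qed
  have le: "RA_payoff h g (traj_pol f \<pi> x) \<le> ?V x" for x
    by (subst pol_seq) (rule V_ge)
  have "\<forall>x. ?V x = RA_payoff h g (traj_pol f \<pi> x)"
  proof
    fix x show "?V x = RA_payoff h g (traj_pol f \<pi> x)" using ge[of x] le[of x] by (rule order_antisym)
  qed
  then show ?thesis by blast
qed

theorem mainTheorem5:
  fixes f :: "'x::finite \<Rightarrow> 'u::finite \<Rightarrow> 'x" and l g :: "'x \<Rightarrow> real"
  shows "\<exists>\<pi> :: 'x \<Rightarrow> 'u. \<forall>x. vRA f l g x = RA_payoff (ltil f l g) g (traj_pol f \<pi> x)"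
proof -
  have "vRA f l g = Vs f (ltil f l g) g" unfolding vRA_def Vs_def by (rule ext) simp
  moreover obtain \<pi> :: "'x \<Rightarrow> 'u" where "\<forall>x. Vs f (ltil f l g) g x = RA_payoff (ltil f l g) g (traj_pol f \<pi> x)"
    using main[of f "ltil f l g" g] by blast
  ultimately show ?thesis by (intro exI[of _ \<pi>]) simp
qed

end
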